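(* For every graph $G$ and integer $m\ge 1$, the generalised windmill $W^{(m)}_G=K_1+\bigcup_{i=1}^m G_i$, where $G_1,\dots,G_m$ are vertex-disjoint copies of $G$, satisfies $f^-(W^{(m)}_G)=m\cdot f^-(G)$ and $f^+(W^{(m)}_G)=m\cdot f^+(G)$.
   Context: All graphs are finite, simple, undirected and connected. $N[v]=N(v)\cup\{v\}$ is the closed neighbourhood. A chromatic colouring of $G$ is a proper vertex colouring $c:V(G)\to\{c_1,\dots,c_{\chi(G)}\}$. With respect to $c$, a vertex $v$ yields a rainbow neighbourhood if $N[v]$ contains a vertex of each colour $c_1,\dots,c_{\chi(G)}$; $r_\chi(G)$ is the number of such vertices, and $r^-_\chi(G)$, $r^+_\chi(G)$ are its minimum and maximum over all chromatic colourings of $G$. Fading: for a set $F\subseteq V(G)$ (a fade set), the vertices of $F$ receive a transparent colour $c^\circ$ not among $c_1,\dots,c_{\chi(G)}$; after fading, $v$ yields a rainbow neighbourhood iff for every $i$ some vertex of $N[v]\setminus F$ has colour $c_i$. The fading number $f^-(G)$ is the maximum $|F|$ over chromatic colourings $c$ attaining $r_\chi=r^-_\chi(G)$ and fade sets $F$ such that, after fading $F$, the number of vertices yielding rainbow neighbourhoods is still $r^-_\chi(G)$; $f^+(G)$ is defined analogously with $r^+_\chi(G)$. The join $G_1+G_2$ of vertex-disjoint graphs is $G_1\cup G_2$ together with all edges joining a vertex of $G_1$ to a vertex of $G_2$. *)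

theory Defs
  imports Main
begin

definition graph :: "'v set \<Rightarrow> ('v \<Rightarrow> 'v \<Rightarrow> bool) \<Rightarrow> bool" where
  "graph V E \<longleftrightarrow> finite V \<and> V \<noteq> {}
     \<and> (\<forall>u v. E u v \<longrightarrow> u \<in> V \<and> v \<in> V)
     \<and> (\<forall>u v. E u v \<longrightarrow> E v u)
     \<and> (\<forall>v. \<not> E v v)
     \<and> (\<forall>u\<in>V. \<forall>v\<in>V. E\<^sup>*\<^sup>* u v)"

text \<open>Proper colourings with colours 0,...,k-1 (colour c_i is i-1).\<close>
definition proper_col :: "'v set \<Rightarrow> ('v \<Rightarrow> 'v \<Rightarrow> bool) \<Rightarrow> ('v \<Rightarrow> nat) \<Rightarrow> nat \<Rightarrow> bool" where
  "proper_col V E c k \<longleftrightarrow> (\<forall>v\<in>V. c v < k) \<and> (\<forall>u\<in>V. \<forall>v\<in>V. E u v \<longrightarrow> c u \<noteq> c v)"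

definition chi :: "'v set \<Rightarrow> ('v \<Rightarrow> 'v \<Rightarrow> bool) \<Rightarrow> nat" where
  "chi V E = (LEAST k. \<exists>c. proper_col V E c k)"

definition chromatic_col :: "'v set \<Rightarrow> ('v \<Rightarrow> 'v \<Rightarrow> bool) \<Rightarrow> ('v \<Rightarrow> nat) \<Rightarrow> bool" where
  "chromatic_col V E c \<longleftrightarrow> proper_col V E c (chi V E)"

definition cnbhd :: "'v set \<Rightarrow> ('v \<Rightarrow> 'v \<Rightarrow> bool) \<Rightarrow> 'v \<Rightarrow> 'v set" where
  "cnbhd V E v = {u \<in> V. u = v \<or> E v u}"

definition rainbow_faded :: "'v set \<Rightarrow> ('v \<Rightarrow> 'v \<Rightarrow> bool) \<Rightarrow> ('v \<Rightarrow> nat) \<Rightarrow> 'v set \<Rightarrow> 'v \<Rightarrow> bool" where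
  "rainbow_faded V E c F v \<longleftrightarrow> (\<forall>i < chi V E. \<exists>u \<in> cnbhd V E v - F. c u = i)"

definition r_faded :: "'v set \<Rightarrow> ('v \<Rightarrow> 'v \<Rightarrow> bool) \<Rightarrow> ('v \<Rightarrow> nat) \<Rightarrow> 'v set \<Rightarrow> nat" where
  "r_faded V E c F = card {v \<in> V. rainbow_faded V E c F v}"

definition r_chi :: "'v set \<Rightarrow> ('v \<Rightarrow> 'v \<Rightarrow> bool) \<Rightarrow> ('v \<Rightarrow> nat) \<Rightarrow> nat" where
  "r_chi V E c = r_faded V E c {}"

definition r_minus :: "'v set \<Rightarrow> ('v \<Rightarrow> 'v \<Rightarrow> bool) \<Rightarrow> nat" where
  "r_minus V E = Min {r_chi V E c | c. chromatic_col V E c}"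

definition r_plus :: "'v set \<Rightarrow> ('v \<Rightarrow> 'v \<Rightarrow> bool) \<Rightarrow> nat" where
  "r_plus V E = Max {r_chi V E c | c. chromatic_col V E c}"

definition f_minus :: "'v set \<Rightarrow> ('v \<Rightarrow> 'v \<Rightarrow> bool) \<Rightarrow> nat" where
  "f_minus V E = Max {card F | c F. chromatic_col V E c \<and> r_chi V E c = r_minus V E
                         \<and> F \<subseteq> V \<and> r_faded V E c F = r_minus V E}"

definition f_plus :: "'v set \<Rightarrow> ('v \<Rightarrow> 'v \<Rightarrow> bool) \<Rightarrow> nat" where
  "f_plus V E = Max {card F | c F. chromatic_col V E c \<and> r_chi V E c = r_plus V E
                         \<and> F \<subseteq> V \<and> r_faded V E c F = r_plus V E}"

text \<open>Join of two vertex-disjoint graphs (disjointness via the sum type).\<close>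
definition join_V :: "'a set \<Rightarrow> 'b set \<Rightarrow> ('a + 'b) set" where
  "join_V V1 V2 = Inl ` V1 \<union> Inr ` V2"

fun join_E :: "'a set \<Rightarrow> ('a \<Rightarrow> 'a \<Rightarrow> bool) \<Rightarrow> 'b set \<Rightarrow> ('b \<Rightarrow> 'b \<Rightarrow> bool)
                 \<Rightarrow> 'a + 'b \<Rightarrow> 'a + 'b \<Rightarrow> bool" where
  "join_E V1 E1 V2 E2 (Inl x) (Inl y) = E1 x y"
| "join_E V1 E1 V2 E2 (Inr x) (Inr y) = E2 x y"
| "join_E V1 E1 V2 E2 (Inl x) (Inr y) = (x \<in> V1 \<and> y \<in> V2)"
| "join_E V1 E1 V2 E2 (Inr x) (Inl y) = (x \<in> V2 \<and> y \<in> V1)"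

definition copies_V :: "nat \<Rightarrow> 'a set \<Rightarrow> ('a \<times> nat) set" where
  "copies_V m V = V \<times> {1..m}"

definition copies_E :: "nat \<Rightarrow> ('a \<Rightarrow> 'a \<Rightarrow> bool) \<Rightarrow> 'a \<times> nat \<Rightarrow> 'a \<times> nat \<Rightarrow> bool" where
  "copies_E m E x y \<longleftrightarrow> snd x = snd y \<and> snd x \<in> {1..m} \<and> E (fst x) (fst y)"

definition K1_V :: "unit set" where "K1_V = {()}"
definition K1_E :: "unit \<Rightarrow> unit \<Rightarrow> bool" where "K1_E x y = False"

definition windmill_V :: "nat \<Rightarrow> 'a set \<Rightarrow> (unit + 'a \<times> nat) set" where
  "windmill_V m V = join_V K1_V (copies_V m V)"

definition windmill_E :: "nat \<Rightarrow> 'a set \<Rightarrow> ('a \<Rightarrow> 'a \<Rightarrow> bool)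
                           \<Rightarrow> unit + 'a \<times> nat \<Rightarrow> unit + 'a \<times> nat \<Rightarrow> bool" where
  "windmill_E m V E = join_E K1_V K1_E (copies_V m V) (copies_E m E)"

end

theory Submission
  imports Defs
begin

definition remap :: "nat \<Rightarrow> nat \<Rightarrow> nat" where
  "remap a x = (if a < x then x - 1 else x)"
definition unremap :: "nat \<Rightarrow> nat \<Rightarrow> nat" where
  "unremap a j = (if j < a then j else Suc j)"

lemma remap_inj: "x \<noteq> a \<Longrightarrow> y \<noteq> a \<Longrightarrow> remap a x = remap a y \<Longrightarrow> x = y"
  by (auto simp: remap_def split: if_splits)
lemma remap_lt: "x \<noteq> a \<Longrightarrow> x < Suc n \<Longrightarrow> a < Suc n \<Longrightarrow> remap a x < n"
  by (auto simp: remap_def)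
lemma remap_unremap: "remap a (unremap a j) = j"
  by (auto simp: remap_def unremap_def)
lemma unremap_ne: "unremap a j \<noteq> a"
  by (auto simp: unremap_def)
lemma unremap_lt: "j < n \<Longrightarrow> unremap a j < Suc n"
  by (auto simp: unremap_def)

lemma chi_le: "proper_col V E c k \<Longrightarrow> chi V E \<le> k"
  unfolding chi_def by (rule Least_le) blast

lemma chromatic_exists:
  assumes "finite V" "\<forall>v. \<not> E v v"
  shows "\<exists>c. chromatic_col V E c"
proof -
  obtain f :: "_ \<Rightarrow> nat" and n :: nat where "f ` V = {i. i < n}" "inj_on f V"
    using finite_imp_inj_to_nat_seg[OF assms(1)] by blast
  have "proper_col V E f n" unfolding proper_col_def
  proof (intro conjI ballI impI)
    fix v assume "v \<in> V" thus "f v < n" using \<open>f ` V = {i. i < n}\<close> by blast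
  next
    fix u v assume uv: "u \<in> V" "v \<in> V" "E u v"
    show "f u \<noteq> f v"
    proof
      assume "f u = f v"
      hence "u = v" using \<open>inj_on f V\<close> uv unfolding inj_on_def by blast
      with uv(3) assms(2) show False by simp
    qed
  qed
  hence "\<exists>k c. proper_col V E c k" by blast
  then show ?thesis unfolding chromatic_col_def chi_def by (rule LeastI_ex)
qed

lemma chi_pos: "chromatic_col V E c \<Longrightarrow> v \<in> V \<Longrightarrow> 0 < chi V E"
  unfolding chromatic_col_def proper_col_def by fastforce

lemma rainbow_exists:
  assumes cc: "chromatic_col V E c" and ne: "V \<noteq> {}" and sym: "\<forall>u v. E u v \<longrightarrow> E v u"
  shows "\<exists>v\<in>V. rainbow_faded V E c {} v"
proof (rule ccontr)
  assume na: "\<not> ?thesis"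
  let ?k = "chi V E"
  obtain v0 where "v0 \<in> V" using ne by blast
  have kpos: "0 < ?k" using chi_pos[OF cc \<open>v0\<in>V\<close>] .
  have pc: "proper_col V E c ?k" using cc unfolding chromatic_col_def .
  have miss: "\<exists>j. j<?k \<and> j \<noteq> c v \<and> (\<forall>u\<in>cnbhd V E v. c u \<noteq> j)" if "v \<in> V" for v
  proof -
    from na that obtain j where j: "j < ?k" "\<not>(\<exists>u\<in>cnbhd V E v. c u = j)"
      unfolding rainbow_faded_def by auto
    have "v \<in> cnbhd V E v" using that unfolding cnbhd_def by auto
    with j show ?thesis by auto
  qed
  define c2 where "c2 v = (if c v = ?k - 1 then (SOME j. j<?k \<and> j \<noteq> c v \<and> (\<forall>u\<in>cnbhd V E v. c u \<noteq> j)) else c v)" for v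
  have c2: "c2 v < ?k - 1 \<and> (c v = ?k - 1 \<longrightarrow> (\<forall>u\<in>cnbhd V E v. c u \<noteq> c2 v))
            \<and> (c v \<noteq> ?k - 1 \<longrightarrow> c2 v = c v)" if "v \<in> V" for v
  proof (cases "c v = ?k - 1")
    case True
    from someI_ex[OF miss[OF that]] True show ?thesis unfolding c2_def by auto
  next
    case False
    with pc that show ?thesis unfolding c2_def proper_col_def by auto
  qed
  have "proper_col V E c2 (?k - 1)"
    unfolding proper_col_def
  proof safe
    fix v assume "v \<in> V" thus "c2 v < ?k - 1" using c2 by blast
  next
    fix u v assume uv: "u \<in> V" "v \<in> V" "E u v" "c2 u = c2 v"
    have cu: "v \<in> cnbhd V E u" using uv unfolding cnbhd_def by auto
    have cv: "u \<in> cnbhd V E v" using uv sym unfolding cnbhd_def by auto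
    have "c u \<noteq> c v" using pc uv unfolding proper_col_def by blast
    show False
    proof (cases "c u = ?k - 1")
      case True
      hence "c v \<noteq> ?k - 1" using \<open>c u \<noteq> c v\<close> by simp
      hence "c2 v = c v" using c2[OF uv(2)] by blast
      moreover have "c v \<noteq> c2 u" using c2[OF uv(1)] True cu by blast
      ultimately show False using uv(4) by simp
    next
      case False
      hence e1: "c2 u = c u" using c2[OF uv(1)] by blast
      show False
      proof (cases "c v = ?k - 1")
        case True
        have "c u \<noteq> c2 v" using c2[OF uv(2)] True cv by blast
        thus False using uv(4) e1 by simp
      next
        case False
        hence "c2 v = c v" using c2[OF uv(2)] by blast
        thus False using uv(4) e1 \<open>c u \<noteq> c v\<close> by simp
      qed
    qed
  qed
  hence "?k \<le> ?k - 1" by (rule chi_le)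
  with kpos show False by simp
qed

lemma rainbow_cong:
  "\<forall>v\<in>V. c v = d v \<Longrightarrow> rainbow_faded V E c F v = rainbow_faded V E d F v"
  unfolding rainbow_faded_def cnbhd_def by auto

lemma r_faded_cong:
  "\<forall>v\<in>V. c v = d v \<Longrightarrow> r_faded V E c F = r_faded V E d F"
  unfolding r_faded_def using rainbow_cong[of V c d E F] by simp

lemma r_faded_le: "finite V \<Longrightarrow> r_faded V E c F \<le> card V"
  unfolding r_faded_def by (rule card_mono) auto

lemma r_faded_mono: "finite V \<Longrightarrow> r_faded V E c F \<le> r_chi V E c"
  unfolding r_chi_def r_faded_def rainbow_faded_def by (rule card_mono) auto

lemma r_pos:
  assumes "chromatic_col V E c" "V \<noteq> {}" "\<forall>u v. E u v \<longrightarrow> E v u" "finite V"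
  shows "1 \<le> r_chi V E c"
proof -
  obtain v where "v \<in> V" "rainbow_faded V E c {} v" using rainbow_exists[OF assms(1-3)] by blast
  hence "{v \<in> V. rainbow_faded V E c {} v} \<noteq> {}" by blast
  moreover have "finite {v \<in> V. rainbow_faded V E c {} v}" using assms(4) by simp
  ultimately show ?thesis unfolding r_chi_def r_faded_def
    by (simp add: Suc_le_eq card_gt_0_iff)
qed

lemma sum_eq_le:
  fixes x y :: "'i \<Rightarrow> nat"
  assumes "finite I" "\<forall>i\<in>I. x i \<le> y i" "sum x I = sum y I"
  shows "\<forall>i\<in>I. x i = y i"
proof (rule ccontr)
  assume "\<not> ?thesis"
  then obtain i where "i \<in> I" "x i < y i" using assms(2) by force
  hence "sum x I < sum y I" using sum_strict_mono_ex1[OF assms(1,2)] by blast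
  with assms(3) show False by simp
qed



context
  fixes V :: "'a set" and E :: "'a \<Rightarrow> 'a \<Rightarrow> bool" and m :: nat
  assumes G: "graph V E" and m: "m \<ge> 1"
begin

abbreviation "VW \<equiv> windmill_V m V"
abbreviation "EW \<equiv> windmill_E m V E"
abbreviation "kk \<equiv> chi V E"

lemma finV: "finite V" and Vne: "V \<noteq> {}" and Esym: "\<forall>u v. E u v \<longrightarrow> E v u"
  and Eirr: "\<forall>v. \<not> E v v" and EV: "\<forall>u v. E u v \<longrightarrow> u \<in> V \<and> v \<in> V"
  using G unfolding graph_def by auto

lemma inl_VW[simp]: "Inl x \<in> VW"
  by (simp add: windmill_V_def join_V_def K1_V_def)
lemma inr_VW[simp]: "Inr (v,i) \<in> VW \<longleftrightarrow> v \<in> V \<and> 1 \<le> i \<and> i \<le> m"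
  by (auto simp: windmill_V_def join_V_def copies_V_def)

lemma EW_simps[simp]:
  "EW (Inl x) (Inl y) = False"
  "EW (Inl x) (Inr (v,i)) \<longleftrightarrow> v\<in>V \<and> 1\<le>i \<and> i\<le>m"
  "EW (Inr (v,i)) (Inl x) \<longleftrightarrow> v\<in>V \<and> 1\<le>i \<and> i\<le>m"
  "EW (Inr (v,i)) (Inr (w,j)) \<longleftrightarrow> i = j \<and> 1 \<le> i \<and> i \<le> m \<and> E v w"
  by (auto simp: windmill_E_def K1_E_def K1_V_def copies_V_def copies_E_def)

lemma VW_eq: "VW = {Inl ()} \<union> Inr ` (V \<times> {1..m})"
  by (auto simp: windmill_V_def join_V_def copies_V_def K1_V_def)

lemma finVW: "finite VW" using finV by (simp add: VW_eq)
lemma VWne: "VW \<noteq> {}" by (simp add: VW_eq)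

lemma symW: "\<forall>u v. EW u v \<longrightarrow> EW v u"
proof (intro allI impI)
  fix u v assume "EW u v" thus "EW v u"
    using Esym by (cases u; cases v) auto
qed

lemma irrW: "\<forall>v. \<not> EW v v"
proof
  fix v show "\<not> EW v v" using Eirr by (cases v) auto
qed

definition lift :: "('a \<Rightarrow> nat) \<Rightarrow> unit + 'a \<times> nat \<Rightarrow> nat" where
  "lift c0 = case_sum (\<lambda>_. kk) (\<lambda>p. c0 (fst p))"

lemma lift_proper:
  assumes "chromatic_col V E c0"
  shows "proper_col VW EW (lift c0) (Suc kk)"
  unfolding proper_col_def
proof (intro conjI ballI impI)
  have pc: "proper_col V E c0 kk" using assms unfolding chromatic_col_def .
  fix z assume "z \<in> VW" thus "lift c0 z < Suc kk"
    using pc unfolding proper_col_def lift_def by (auto simp: VW_eq)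
next
  have pc: "proper_col V E c0 kk" using assms unfolding chromatic_col_def .
  fix u v assume "u \<in> VW" "v \<in> VW" "EW u v"
  thus "lift c0 u \<noteq> lift c0 v"
    using pc unfolding proper_col_def lift_def
    by (cases u; cases v) (auto simp: VW_eq)
qed

definition cop :: "(unit + 'a \<times> nat \<Rightarrow> nat) \<Rightarrow> nat \<Rightarrow> 'a \<Rightarrow> nat" where
  "cop c' i = (\<lambda>v. remap (c' (Inl ())) (c' (Inr (v,i))))"
definition fad :: "(unit + 'a \<times> nat) set \<Rightarrow> nat \<Rightarrow> 'a set" where
  "fad F i = {v. Inr (v,i) \<in> F}"

lemma only_center:
  assumes "proper_col VW EW c' j" "z \<in> VW" "c' z = c' (Inl ())"
  shows "z = Inl ()"
proof (cases z)
  case (Inl u) thus ?thesis by simp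
next
  case (Inr p)
  obtain v i where p: "p = (v,i)" by (cases p)
  have "EW (Inl ()) z" using assms(2) by (simp add: Inr p)
  hence "c' (Inl ()) \<noteq> c' z" using assms(1,2) unfolding proper_col_def by auto
  with assms(3) show ?thesis by simp
qed

lemma cop_proper:
  assumes pc: "proper_col VW EW c' j" and i: "1 \<le> i" "i \<le> m"
  shows "proper_col V E (cop c' i) (j - 1)"
  unfolding proper_col_def
proof (intro conjI ballI impI)
  let ?a = "c' (Inl ())"
  have aj: "?a < j" using pc unfolding proper_col_def by simp
  fix v assume v: "v \<in> V"
  have "c' (Inr (v,i)) < j" using pc v i unfolding proper_col_def by simp
  moreover have "c' (Inr (v,i)) \<noteq> ?a" using only_center[OF pc, of "Inr (v,i)"] v i by auto
  ultimately show "cop c' i v < j - 1" unfolding cop_def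
    using remap_lt[of "c' (Inr (v,i))" ?a "j - 1"] aj by simp
next
  let ?a = "c' (Inl ())"
  fix u v assume uv: "u \<in> V" "v \<in> V" "E u v"
  have "c' (Inr (u,i)) \<noteq> c' (Inr (v,i))" using pc uv i unfolding proper_col_def by simp
  moreover have "c' (Inr (v,i)) \<noteq> ?a" using only_center[OF pc, of "Inr (v,i)"] uv i by auto
  moreover have "c' (Inr (u,i)) \<noteq> ?a" using only_center[OF pc, of "Inr (u,i)"] uv i by auto
  ultimately show "cop c' i u \<noteq> cop c' i v" unfolding cop_def using remap_inj by blast
qed

lemma G_chrom: "\<exists>c. chromatic_col V E c"
  using chromatic_exists[of V E] finV Eirr by blast

lemma chiW: "chi VW EW = Suc kk"
  unfolding chi_def[of VW EW]
proof (rule Least_equality)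
  obtain c0 where "chromatic_col V E c0" using G_chrom by blast
  thus "\<exists>c. proper_col VW EW c (Suc kk)" using lift_proper by blast
next
  fix j assume "\<exists>c. proper_col VW EW c j"
  then obtain c' where pc: "proper_col VW EW c' j" by blast
  have "Inl () \<in> VW" by simp
  hence "c' (Inl ()) < j" using pc unfolding proper_col_def by blast
  hence "0 < j" by simp
  have "proper_col V E (cop c' 1) (j - 1)" using cop_proper[OF pc] m by simp
  hence "kk \<le> j - 1" by (rule chi_le)
  with \<open>0 < j\<close> show "Suc kk \<le> j" by simp
qed

lemma chromW_proper: "chromatic_col VW EW c' \<Longrightarrow> proper_col VW EW c' (Suc kk)"
  unfolding chromatic_col_def chiW .

lemma lift_chrom: "chromatic_col V E c0 \<Longrightarrow> chromatic_col VW EW (lift c0)"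
  unfolding chromatic_col_def chiW using lift_proper unfolding chromatic_col_def .

lemma cop_chrom: "chromatic_col VW EW c' \<Longrightarrow> 1 \<le> i \<Longrightarrow> i \<le> m \<Longrightarrow> chromatic_col V E (cop c' i)"
  using cop_proper[OF chromW_proper] unfolding chromatic_col_def by fastforce

lemma cnbhd_center: "cnbhd VW EW (Inl ()) = VW"
proof -
  have "z \<in> cnbhd VW EW (Inl ())" if "z \<in> VW" for z
    using that unfolding cnbhd_def by (cases z) (auto simp: VW_eq)
  thus ?thesis unfolding cnbhd_def by auto
qed

lemma rb_center_free:
  assumes cc: "chromatic_col VW EW c'" and rb: "rainbow_faded VW EW c' F z"
  shows "Inl () \<notin> F \<and> rainbow_faded VW EW c' F (Inl ())"
proof
  have pc: "proper_col VW EW c' (Suc kk)" using chromW_proper[OF cc] .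
  have "c' (Inl ()) < chi VW EW" using pc chiW unfolding proper_col_def by simp
  then obtain u where u: "u \<in> cnbhd VW EW z - F" "c' u = c' (Inl ())"
    using rb unfolding rainbow_faded_def by blast
  have "u \<in> VW" using u unfolding cnbhd_def by auto
  hence "u = Inl ()" using only_center[OF pc] u by blast
  thus "Inl () \<notin> F" using u by simp
  show "rainbow_faded VW EW c' F (Inl ())"
    using rb unfolding rainbow_faded_def cnbhd_center unfolding cnbhd_def by blast
qed

lemma rb_copy:
  assumes cc: "chromatic_col VW EW c'" and v: "v \<in> V" and i: "1 \<le> i" "i \<le> m"
  shows "rainbow_faded VW EW c' F (Inr (v,i)) \<longleftrightarrow> Inl () \<notin> F \<and> rainbow_faded V E (cop c' i) (fad F i) v"
proof
  have pc: "proper_col VW EW c' (Suc kk)" using chromW_proper[OF cc] .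
  let ?a = "c' (Inl ())"
  have a: "?a < Suc kk" using pc unfolding proper_col_def by simp
  assume rb: "rainbow_faded VW EW c' F (Inr (v,i))"
  show "Inl () \<notin> F \<and> rainbow_faded V E (cop c' i) (fad F i) v"
  proof
    show "Inl () \<notin> F" using rb_center_free[OF cc rb] by blast
    show "rainbow_faded V E (cop c' i) (fad F i) v"
      unfolding rainbow_faded_def
    proof (intro allI impI)
      fix j assume j: "j < kk"
      let ?x = "unremap ?a j"
      have "?x < chi VW EW" using unremap_lt[OF j] chiW by simp
      then obtain u where u: "u \<in> cnbhd VW EW (Inr (v,i)) - F" "c' u = ?x"
        using rb unfolding rainbow_faded_def by blast
      have "u \<noteq> Inl ()" using u unremap_ne by metis
      then obtain w i' where w: "u = Inr (w,i')" by (cases u) auto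
      have "i' = i" "w \<in> V" "w = v \<or> E v w" using u w unfolding cnbhd_def by auto
      hence "w \<in> cnbhd V E v - fad F i" using u w unfolding cnbhd_def fad_def by auto
      moreover have "cop c' i w = j" using u w \<open>i' = i\<close> unfolding cop_def by (simp add: remap_unremap)
      ultimately show "\<exists>u\<in>cnbhd V E v - fad F i. cop c' i u = j" by blast
    qed
  qed
next
  have pc: "proper_col VW EW c' (Suc kk)" using chromW_proper[OF cc] .
  let ?a = "c' (Inl ())"
  have a: "?a < Suc kk" using pc unfolding proper_col_def by simp
  assume h: "Inl () \<notin> F \<and> rainbow_faded V E (cop c' i) (fad F i) v"
  show "rainbow_faded VW EW c' F (Inr (v,i))"
    unfolding rainbow_faded_def chiW
  proof (intro allI impI)
    fix x assume x: "x < Suc kk"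
    show "\<exists>u\<in>cnbhd VW EW (Inr (v, i)) - F. c' u = x"
    proof (cases "x = ?a")
      case True
      have "Inl () \<in> cnbhd VW EW (Inr (v, i)) - F" using h v i unfolding cnbhd_def by simp
      thus ?thesis using True by blast
    next
      case False
      have "remap ?a x < kk" using remap_lt[OF False x a] .
      then obtain w where w: "w \<in> cnbhd V E v - fad F i" "cop c' i w = remap ?a x"
        using h unfolding rainbow_faded_def by blast
      have wV: "w \<in> V" using w unfolding cnbhd_def by auto
      have "c' (Inr (w,i)) \<noteq> ?a" using only_center[OF pc, of "Inr (w,i)"] wV i by auto
      hence "c' (Inr (w,i)) = x" using remap_inj[OF _ False] w unfolding cop_def by blast
      moreover have "Inr (w,i) \<in> cnbhd VW EW (Inr (v, i)) - F"
        using w wV i unfolding cnbhd_def fad_def by auto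
      ultimately show ?thesis by blast
    qed
  qed
qed


lemma r_decomp:
  assumes cc: "chromatic_col VW EW c'" and nF: "Inl () \<notin> F"
  shows "r_faded VW EW c' F = (if rainbow_faded VW EW c' F (Inl ()) then 1 else 0)
            + (\<Sum>i\<in>{1..m}. r_faded V E (cop c' i) (fad F i))"
proof -
  let ?R = "\<lambda>i. {v \<in> V. rainbow_faded V E (cop c' i) (fad F i) v}"
  let ?A = "{z :: unit + 'a \<times> nat. z = Inl () \<and> rainbow_faded VW EW c' F (Inl ())}"
  let ?B = "\<Union>i\<in>{1..m}. (\<lambda>v. Inr (v,i) :: unit + 'a \<times> nat) ` ?R i"
  have eq: "{z \<in> VW. rainbow_faded VW EW c' F z} = ?A \<union> ?B"
  proof (rule set_eqI)
    fix z show "z \<in> {z \<in> VW. rainbow_faded VW EW c' F z} \<longleftrightarrow> z \<in> ?A \<union> ?B"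
    proof (cases z)
      case (Inl u) then show ?thesis by auto
    next
      case (Inr p)
      obtain v i where p: "p = (v,i)" by (cases p)
      show ?thesis
      proof
        assume "z \<in> {z \<in> VW. rainbow_faded VW EW c' F z}"
        hence "v \<in> V" "1 \<le> i" "i \<le> m" "rainbow_faded VW EW c' F (Inr (v,i))" using Inr p by auto
        hence "v \<in> ?R i" using rb_copy[OF cc] by blast
        thus "z \<in> ?A \<union> ?B" using Inr p \<open>1 \<le> i\<close> \<open>i \<le> m\<close> by auto
      next
        assume "z \<in> ?A \<union> ?B"
        then obtain j w where "j \<in> {1..m}" "w \<in> ?R j" "z = Inr (w,j)" using Inr by auto
        thus "z \<in> {z \<in> VW. rainbow_faded VW EW c' F z}" using rb_copy[OF cc] nF by auto
      qed
    qed
  qed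
  have fin: "finite (?R i)" for i using finV by auto
  have finA: "finite ?A" by (rule finite_subset[of _ "{Inl ()}"]) auto
  have finB: "finite ?B" using fin by blast
  have disj: "?A \<inter> ?B = {}" by blast
  have c1: "card (?A \<union> ?B) = card ?A + card ?B"
    using card_Un_disjoint[OF finA finB disj] .
  have c2: "card ?A = (if rainbow_faded VW EW c' F (Inl ()) then 1 else 0)" by auto
  have c3: "card ?B = (\<Sum>i\<in>{1..m}. card ((\<lambda>v. Inr (v,i) :: unit + 'a \<times> nat) ` ?R i))"
  proof (rule card_UN_disjoint)
    show "finite {1..m}" by simp
    show "\<forall>i\<in>{1..m}. finite ((\<lambda>v. Inr (v,i) :: unit + 'a \<times> nat) ` ?R i)" using fin by blast
    show "\<forall>i\<in>{1..m}. \<forall>j\<in>{1..m}. i \<noteq> j \<longrightarrow> (\<lambda>v. Inr (v,i) :: unit + 'a \<times> nat) ` ?R i \<inter> (\<lambda>v. Inr (v,j) :: unit + 'a \<times> nat) ` ?R j = {}"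
      by blast
  qed
  have c4: "card ((\<lambda>v. Inr (v,i) :: unit + 'a \<times> nat) ` ?R i) = r_faded V E (cop c' i) (fad F i)" for i
  proof -
    have "card ((\<lambda>v. Inr (v,i) :: unit + 'a \<times> nat) ` ?R i) = card (?R i)"
      by (rule card_image) (auto simp: inj_on_def)
    thus ?thesis unfolding r_faded_def .
  qed
  have "r_faded VW EW c' F = card (?A \<union> ?B)" unfolding r_faded_def eq ..
  also have "\<dots> = card ?A + card ?B" by (rule c1)
  also have "\<dots> = (if rainbow_faded VW EW c' F (Inl ()) then 1 else 0)
            + (\<Sum>i\<in>{1..m}. r_faded V E (cop c' i) (fad F i))"
    unfolding c2 c3 c4 ..
  finally show ?thesis .
qed

lemma r_center_faded:
  assumes cc: "chromatic_col VW EW c'" and "Inl () \<in> F"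
  shows "r_faded VW EW c' F = 0"
proof -
  have "{z \<in> VW. rainbow_faded VW EW c' F z} = {}" using rb_center_free[OF cc] assms(2) by blast
  thus ?thesis unfolding r_faded_def by (metis card.empty)
qed

lemma r_full:
  assumes cc: "chromatic_col VW EW c'" and nF: "Inl () \<notin> F"
    and ex: "\<exists>i\<in>{1..m}. 0 < r_faded V E (cop c' i) (fad F i)"
  shows "r_faded VW EW c' F = Suc (\<Sum>i\<in>{1..m}. r_faded V E (cop c' i) (fad F i))"
proof -
  obtain i where i: "i \<in> {1..m}" "0 < r_faded V E (cop c' i) (fad F i)" using ex by blast
  then obtain v where v: "v \<in> V" "rainbow_faded V E (cop c' i) (fad F i) v"
    unfolding r_faded_def by (metis (no_types, lifting) card.empty empty_Collect_eq less_irrefl)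
  hence "rainbow_faded VW EW c' F (Inr (v,i))" using rb_copy[OF cc] i nF by auto
  hence "rainbow_faded VW EW c' F (Inl ())" using rb_center_free[OF cc] by blast
  thus ?thesis using r_decomp[OF cc nF] by simp
qed

lemma fad_empty[simp]: "fad {} i = {}" by (simp add: fad_def)

lemma rchiW:
  assumes cc: "chromatic_col VW EW c'"
  shows "r_chi VW EW c' = Suc (\<Sum>i\<in>{1..m}. r_chi V E (cop c' i))"
proof -
  have "1 \<le> r_chi V E (cop c' 1)" using r_pos[OF cop_chrom[OF cc] Vne Esym finV] m by simp
  hence "\<exists>i\<in>{1..m}. 0 < r_faded V E (cop c' i) (fad {} i)"
    using m unfolding r_chi_def by (intro bexI[of _ 1]) auto
  from r_full[OF cc _ this] show ?thesis unfolding r_chi_def by simp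
qed

lemma cop_lift: "chromatic_col V E c0 \<Longrightarrow> v \<in> V \<Longrightarrow> cop (lift c0) i v = c0 v"
  unfolding cop_def lift_def remap_def chromatic_col_def proper_col_def by auto

lemma r_lift: "chromatic_col V E c0 \<Longrightarrow> r_faded V E (cop (lift c0) i) F = r_faded V E c0 F"
  by (rule r_faded_cong) (simp add: cop_lift)

lemma rchi_lift: "chromatic_col V E c0 \<Longrightarrow> r_chi VW EW (lift c0) = Suc (m * r_chi V E c0)"
  using rchiW[OF lift_chrom] r_lift unfolding r_chi_def by simp

lemma finSG: "finite {r_chi V E c |c. chromatic_col V E c}"
  by (rule finite_subset[of _ "{..card V}"]) (auto simp: r_chi_def intro: r_faded_le finV)
lemma finSW: "finite {r_chi VW EW c |c. chromatic_col VW EW c}"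
  by (rule finite_subset[of _ "{..card VW}"]) (auto simp: r_chi_def intro: r_faded_le finVW)
lemma neSG: "{r_chi V E c |c. chromatic_col V E c} \<noteq> {}" using G_chrom by blast

lemma rmin_props: "(\<forall>c. chromatic_col V E c \<longrightarrow> r_minus V E \<le> r_chi V E c)
   \<and> (\<exists>c. chromatic_col V E c \<and> r_chi V E c = r_minus V E)"
proof
  show "\<forall>c. chromatic_col V E c \<longrightarrow> r_minus V E \<le> r_chi V E c"
    unfolding r_minus_def using Min_le[OF finSG] by blast
  have "r_minus V E \<in> {r_chi V E c |c. chromatic_col V E c}"
    unfolding r_minus_def using Min_in[OF finSG neSG] .
  thus "\<exists>c. chromatic_col V E c \<and> r_chi V E c = r_minus V E" by auto
qed

lemma rmax_props: "(\<forall>c. chromatic_col V E c \<longrightarrow> r_chi V E c \<le> r_plus V E)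
   \<and> (\<exists>c. chromatic_col V E c \<and> r_chi V E c = r_plus V E)"
proof
  show "\<forall>c. chromatic_col V E c \<longrightarrow> r_chi V E c \<le> r_plus V E"
    unfolding r_plus_def using Max_ge[OF finSG] by blast
  have "r_plus V E \<in> {r_chi V E c |c. chromatic_col V E c}"
    unfolding r_plus_def using Max_in[OF finSG neSG] .
  thus "\<exists>c. chromatic_col V E c \<and> r_chi V E c = r_plus V E" by auto
qed

lemma rminusW: "r_minus VW EW = Suc (m * r_minus V E)"
proof -
  obtain c0 where c0: "chromatic_col V E c0" "r_chi V E c0 = r_minus V E" using rmin_props by blast
  have "Min {r_chi VW EW c |c. chromatic_col VW EW c} = Suc (m * r_minus V E)"
  proof (rule Min_eqI[OF finSW])
    fix y assume "y \<in> {r_chi VW EW c |c. chromatic_col VW EW c}"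
    then obtain c' where c': "chromatic_col VW EW c'" "y = r_chi VW EW c'" by blast
    have "(\<Sum>i\<in>{1..m}. r_minus V E) \<le> (\<Sum>i\<in>{1..m}. r_chi V E (cop c' i))"
      by (rule sum_mono) (use rmin_props cop_chrom[OF c'(1)] in auto)
    thus "Suc (m * r_minus V E) \<le> y" using rchiW[OF c'(1)] c'(2) by simp
  next
    show "Suc (m * r_minus V E) \<in> {r_chi VW EW c |c. chromatic_col VW EW c}"
      using rchi_lift[OF c0(1)] lift_chrom[OF c0(1)] c0(2) by force
  qed
  thus ?thesis unfolding r_minus_def .
qed

lemma rplusW: "r_plus VW EW = Suc (m * r_plus V E)"
proof -
  obtain c0 where c0: "chromatic_col V E c0" "r_chi V E c0 = r_plus V E" using rmax_props by blast
  have "Max {r_chi VW EW c |c. chromatic_col VW EW c} = Suc (m * r_plus V E)"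
  proof (rule Max_eqI[OF finSW])
    fix y assume "y \<in> {r_chi VW EW c |c. chromatic_col VW EW c}"
    then obtain c' where c': "chromatic_col VW EW c'" "y = r_chi VW EW c'" by blast
    have "(\<Sum>i\<in>{1..m}. r_chi V E (cop c' i)) \<le> (\<Sum>i\<in>{1..m}. r_plus V E)"
      by (rule sum_mono) (use rmax_props cop_chrom[OF c'(1)] in auto)
    thus "y \<le> Suc (m * r_plus V E)" using rchiW[OF c'(1)] c'(2) by simp
  next
    show "Suc (m * r_plus V E) \<in> {r_chi VW EW c |c. chromatic_col VW EW c}"
      using rchi_lift[OF c0(1)] lift_chrom[OF c0(1)] c0(2) by force
  qed
  thus ?thesis unfolding r_plus_def .
qed

lemma f_gen:
  assumes ext: "(\<forall>c. chromatic_col V E c \<longrightarrow> T \<le> r_chi V E c) \<or> (\<forall>c. chromatic_col V E c \<longrightarrow> r_chi V E c \<le> T)"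
  and ach: "\<exists>c. chromatic_col V E c \<and> r_chi V E c = T"
  shows "Max {card F |c F. chromatic_col VW EW c \<and> r_chi VW EW c = Suc (m*T) \<and> F \<subseteq> VW \<and> r_faded VW EW c F = Suc (m*T)}
       = m * Max {card F |c F. chromatic_col V E c \<and> r_chi V E c = T \<and> F \<subseteq> V \<and> r_faded V E c F = T}"
    (is "Max ?SW = m * Max ?SG")
proof -
  have finG: "finite ?SG"
  proof (rule finite_subset[of _ "card ` Pow V"])
    show "?SG \<subseteq> card ` Pow V"
    proof
      fix x assume "x \<in> ?SG"
      then obtain F where "x = card F" "F \<subseteq> V" by blast
      thus "x \<in> card ` Pow V" by blast
    qed
    show "finite (card ` Pow V)" using finV by simp
  qed
  have finW: "finite ?SW"
  proof (rule finite_subset[of _ "card ` Pow VW"])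
    show "?SW \<subseteq> card ` Pow VW"
    proof
      fix x assume "x \<in> ?SW"
      then obtain F where "x = card F" "F \<subseteq> VW" by blast
      thus "x \<in> card ` Pow VW" by blast
    qed
    show "finite (card ` Pow VW)" using finVW by simp
  qed
  obtain c0 where c0: "chromatic_col V E c0" "r_chi V E c0 = T" using ach by blast
  have Tpos: "1 \<le> T" using r_pos[OF c0(1) Vne Esym finV] c0(2) by simp
  have rf0: "r_faded V E c0 {} = T" using c0 by (simp add: r_chi_def)
  have "card ({}::'a set) \<in> ?SG"
    apply (rule CollectI) apply (rule exI[of _ c0]) apply (rule exI[of _ "{}"])
    using c0 rf0 by simp
  hence neG: "?SG \<noteq> {}" by blast
  have "Max ?SG \<in> ?SG" using Max_in[OF finG neG] .
  then obtain c1 F1 where c1: "Max ?SG = card F1" "chromatic_col V E c1" "r_chi V E c1 = T"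
    "F1 \<subseteq> V" "r_faded V E c1 F1 = T" by blast
  define F :: "(unit + 'a \<times> nat) set" where "F = (\<lambda>p. Inr p) ` (F1 \<times> {1..m})"
  have fadF: "fad F i = F1" if "i \<in> {1..m}" for i using that unfolding F_def fad_def by auto
  have nF: "Inl () \<notin> F" unfolding F_def by auto
  have lc: "chromatic_col VW EW (lift c1)" using lift_chrom[OF c1(2)] .
  have "r_faded V E (cop (lift c1) i) (fad F i) = T" if "i \<in> {1..m}" for i
    using r_lift[OF c1(2)] fadF[OF that] c1(5) by simp
  hence sumT: "(\<Sum>i\<in>{1..m}. r_faded V E (cop (lift c1) i) (fad F i)) = m * T" by simp
  have h1: "r_faded V E (cop (lift c1) 1) (fad F 1) = T"
    using r_lift[OF c1(2)] fadF[of 1] m c1(5) by simp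
  have "\<exists>i\<in>{1..m}. 0 < r_faded V E (cop (lift c1) i) (fad F i)"
    using h1 m Tpos by (intro bexI[of _ 1]) auto
  from r_full[OF lc nF this] sumT have rf: "r_faded VW EW (lift c1) F = Suc (m*T)" by simp
  have rc: "r_chi VW EW (lift c1) = Suc (m*T)" using rchi_lift[OF c1(2)] c1(3) by simp
  have FV: "F \<subseteq> VW" using c1(4) unfolding F_def by auto
  have "card F = card (F1 \<times> {1..m})" unfolding F_def by (rule card_image) (auto simp: inj_on_def)
  hence cF: "card F = m * card F1" by (simp add: card_cartesian_product)
  have eqM: "m * Max ?SG = card F" using cF c1(1) by simp
  have inW: "m * Max ?SG \<in> ?SW" unfolding eqM
    apply (rule CollectI) apply (rule exI[of _ "lift c1"]) apply (rule exI[of _ F])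
    using lc rc FV rf by simp
  hence neW: "?SW \<noteq> {}" by blast
  have "Max ?SW \<le> m * Max ?SG"
  proof (subst Max_le_iff[OF finW neW], intro ballI)
    fix x assume "x \<in> ?SW"
    then obtain c' F' where g: "x = card F'" "chromatic_col VW EW c'" "r_chi VW EW c' = Suc (m*T)"
      "F' \<subseteq> VW" "r_faded VW EW c' F' = Suc (m*T)" by blast
    have nF': "Inl () \<notin> F'" using r_center_faded[OF g(2)] g(5) by force
    define a where "a i = r_faded V E (cop c' i) (fad F' i)" for i
    define b where "b i = r_chi V E (cop c' i)" for i
    have ab: "\<forall>i\<in>{1..m}. a i \<le> b i" unfolding a_def b_def
      using r_faded_mono[OF finV] by blast
    have sb: "sum b {1..m} = m * T" using rchiW[OF g(2)] g(3) unfolding b_def by simp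
    have "sum a {1..m} \<le> sum b {1..m}" using ab by (intro sum_mono) blast
    moreover have "Suc (m*T) = (if rainbow_faded VW EW c' F' (Inl ()) then 1 else 0) + sum a {1..m}"
      using r_decomp[OF g(2) nF'] g(5) unfolding a_def by simp
    ultimately have sa: "sum a {1..m} = m * T" using sb by (simp split: if_splits)
    have cT: "sum (\<lambda>_. T) {1..m} = m * T" by simp
    have bT: "\<forall>i\<in>{1..m}. b i = T"
      using ext
    proof
      assume "\<forall>c. chromatic_col V E c \<longrightarrow> T \<le> r_chi V E c"
      hence "\<forall>i\<in>{1..m}. T \<le> b i" unfolding b_def using cop_chrom[OF g(2)] by auto
      from sum_eq_le[OF _ this] sb cT show ?thesis by auto
    next
      assume "\<forall>c. chromatic_col V E c \<longrightarrow> r_chi V E c \<le> T"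
      hence "\<forall>i\<in>{1..m}. b i \<le> T" unfolding b_def using cop_chrom[OF g(2)] by auto
      from sum_eq_le[OF _ this] sb cT show ?thesis by auto
    qed
    have aT: "\<forall>i\<in>{1..m}. a i = T"
    proof -
      have "\<forall>i\<in>{1..m}. a i \<le> T" using ab bT by auto
      from sum_eq_le[OF _ this] sa cT show ?thesis by auto
    qed
    have fadV: "fad F' i \<subseteq> V" for i using g(4) unfolding fad_def by auto
    have cardle: "card (fad F' i) \<le> Max ?SG" if i: "i \<in> {1..m}" for i
    proof -
      have fV: "fad F' i \<subseteq> V" using fadV .
      have "cop c' i \<in> {c. chromatic_col V E c}" using cop_chrom[OF g(2)] i by simp
      hence "card (fad F' i) \<in> ?SG"
        apply - apply (rule CollectI) apply (rule exI[of _ "cop c' i"]) apply (rule exI[of _ "fad F' i"])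
        using i bT aT fV unfolding a_def b_def by simp
      thus ?thesis using Max_ge[OF finG] by blast
    qed
    have sub: "F' \<subseteq> (\<Union>i\<in>{1..m}. (\<lambda>v. Inr (v,i) :: unit + 'a \<times> nat) ` fad F' i)"
    proof
      fix z assume z: "z \<in> F'"
      hence "z \<in> VW" using g(4) by blast
      moreover have "z \<noteq> Inl ()" using z nF' by blast
      ultimately obtain v i where "z = Inr (v,i)" "1 \<le> i" "i \<le> m" by (auto simp: VW_eq)
      thus "z \<in> (\<Union>i\<in>{1..m}. (\<lambda>v. Inr (v,i) :: unit + 'a \<times> nat) ` fad F' i)" using z unfolding fad_def by auto
    qed
    have finfad: "finite (fad F' i)" for i
      using finite_subset[OF fadV finV] .
    have "card F' \<le> card (\<Union>i\<in>{1..m}. (\<lambda>v. Inr (v,i) :: unit + 'a \<times> nat) ` fad F' i)"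
      by (rule card_mono[OF _ sub]) (auto simp: finfad)
    also have "\<dots> \<le> (\<Sum>i\<in>{1..m}. card ((\<lambda>v. Inr (v,i) :: unit + 'a \<times> nat) ` fad F' i))" by (rule card_UN_le) simp
    also have "\<dots> \<le> (\<Sum>i\<in>{1..m}. card (fad F' i))" by (rule sum_mono) (rule card_image_le[OF finfad])
    also have "\<dots> \<le> (\<Sum>i\<in>{1..m}. Max ?SG)" by (rule sum_mono) (rule cardle)
    also have "\<dots> = m * Max ?SG" by simp
    finally show "x \<le> m * Max ?SG" using g(1) by simp
  qed
  moreover have "m * Max ?SG \<le> Max ?SW" using Max_ge[OF finW inW] .
  ultimately show ?thesis by simp
qed

lemma main_ctx:
  "f_minus VW EW = m * f_minus V E \<and> f_plus VW EW = m * f_plus V E"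
proof
  show "f_minus VW EW = m * f_minus V E"
    unfolding f_minus_def rminusW using f_gen[of "r_minus V E"] rmin_props by blast
  show "f_plus VW EW = m * f_plus V E"
    unfolding f_plus_def rplusW using f_gen[of "r_plus V E"] rmax_props by blast
qed

end

theorem mainTheorem10:
  fixes V :: "'a set" and E :: "'a \<Rightarrow> 'a \<Rightarrow> bool" and m :: nat
  assumes "graph V E" and "m \<ge> 1"
  shows "f_minus (windmill_V m V) (windmill_E m V E) = m * f_minus V E
       \<and> f_plus (windmill_V m V) (windmill_E m V E) = m * f_plus V E"
  using main_ctx[OF assms] .

end
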